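(* Fix $\tau>0$ and suppose that for every $\lambda\in\Lambda$ the problem $\max_{\pi\in\Pi}\mathcal{L}_\tau(\pi,\lambda)$ has exactly one optimal policy $\pi^*_{\tau,\lambda}$. Then $d_\tau$ is differentiable at every $\lambda\in\Lambda$, and $$\nabla d_\tau(\lambda)=V^{\pi^*_{\tau,\lambda}}(\rho)-c.$$
   Context: Finite MDP with state space $\mathcal S$, action space $\mathcal A$, transition kernel $\mathrm P$, discount $\gamma\in(0,1)$, initial distribution $\rho$, positive finite rewards $r_0,\dots,r_m$. $\Pi$ is the (compact) set of stationary policies. $V_i^\pi(\rho)=\mathbb{E}[\sum_{t\ge0}\gamma^tr_i(s_t,a_t)]$ with $s_0\sim\rho$, $a_t\sim\pi(\cdot\mid s_t)$, $s_{t+1}\sim\mathrm P(\cdot\mid s_t,a_t)$; $V^\pi(\rho)=(V_1^\pi(\rho),\dots,V_m^\pi(\rho))^\top$; $c\in\mathbb{R}^m$. Discounted entropy $\mathcal H(\pi)=-\mathbb{E}[\sum_{t\ge0}\gamma^t\log\pi(a_t\mid s_t)]$ (same dynamics). $\mathcal L_\tau(\pi,\lambda)=V_0^\pi(\rho)+\langle\lambda,V^\pi(\rho)-c\rangle+\tau\mathcal H(\pi)$ for $\lambda\in\mathbb{R}^m$, and $d_\tau(\lambda)=\max_{\pi\in\Pi}\mathcal L_\tau(\pi,\lambda)$. Given $\xi>0$ (the Slater constant: a policy $\pi_\xi$ with $V_i^{\pi_\xi}(\rho)\ge c_i+\xi$ for all $i$), $r_{0,\max}=\max_{s,a}r_0(s,a)$,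 $B_\lambda=\frac{r_{0,\max}+\log|\mathcal A|}{(1-\gamma)\xi}$ and $\Lambda=\{\lambda\in\mathbb{R}^m_+:\|\lambda\|_1\le B_\lambda\}$. *)

theory Defs
  imports "HOL-Analysis.Analysis"
begin

text \<open>Finite MDP: states 's, actions 'a (finite types), constraint index type 'm
 (so lambda, c are vectors in real^'m).  Transition kernel P s a s'.
 Stationary policies are stochastic matrices pi s a.\<close>

definition policies :: "('s::finite \<Rightarrow> 'a::finite \<Rightarrow> real) set" where
  "policies = {\<pi>. (\<forall>s a. 0 \<le> \<pi> s a) \<and> (\<forall>s. (\<Sum>a\<in>UNIV. \<pi> s a) = 1)}"

fun state_dist :: "('s::finite \<Rightarrow> 'a::finite \<Rightarrow> 's \<Rightarrow> real) \<Rightarrow> ('s \<Rightarrow> real)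
    \<Rightarrow> ('s \<Rightarrow> 'a \<Rightarrow> real) \<Rightarrow> nat \<Rightarrow> 's \<Rightarrow> real" where
  "state_dist P \<rho> \<pi> 0 = \<rho>"
| "state_dist P \<rho> \<pi> (Suc t) =
     (\<lambda>s'. \<Sum>s\<in>UNIV. \<Sum>a\<in>UNIV. state_dist P \<rho> \<pi> t s * \<pi> s a * P s a s')"

definition disc_value :: "('s::finite \<Rightarrow> 'a::finite \<Rightarrow> 's \<Rightarrow> real) \<Rightarrow> ('s \<Rightarrow> real) \<Rightarrow> real
    \<Rightarrow> ('s \<Rightarrow> 'a \<Rightarrow> real) \<Rightarrow> ('s \<Rightarrow> 'a \<Rightarrow> real) \<Rightarrow> real" where
  "disc_value P \<rho> \<gamma> \<pi> f =
     (\<Sum>t. \<gamma> ^ t * (\<Sum>s\<in>UNIV. \<Sum>a\<in>UNIV. state_dist P \<rho> \<pi> t s * \<pi> s a * f s a))"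

text \<open>Discounted entropy H(pi) = -E[sum_t gamma^t log pi(a_t|s_t)]
  (terms with pi s a = 0 contribute 0, as they are multiplied by pi s a).\<close>
definition disc_entropy :: "('s::finite \<Rightarrow> 'a::finite \<Rightarrow> 's \<Rightarrow> real) \<Rightarrow> ('s \<Rightarrow> real) \<Rightarrow> real
    \<Rightarrow> ('s \<Rightarrow> 'a \<Rightarrow> real) \<Rightarrow> real" where
  "disc_entropy P \<rho> \<gamma> \<pi> = disc_value P \<rho> \<gamma> \<pi> (\<lambda>s a. - ln (\<pi> s a))"

definition value_vec :: "('s::finite \<Rightarrow> 'a::finite \<Rightarrow> 's \<Rightarrow> real) \<Rightarrow> ('s \<Rightarrow> real) \<Rightarrow> real
    \<Rightarrow> ('m::finite \<Rightarrow> 's \<Rightarrow> 'a \<Rightarrow> real) \<Rightarrow> ('s \<Rightarrow> 'a \<Rightarrow> real) \<Rightarrow> real ^ 'm" where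
  "value_vec P \<rho> \<gamma> r \<pi> = (\<chi> i. disc_value P \<rho> \<gamma> \<pi> (r i))"

definition lagrangian :: "('s::finite \<Rightarrow> 'a::finite \<Rightarrow> 's \<Rightarrow> real) \<Rightarrow> ('s \<Rightarrow> real) \<Rightarrow> real
    \<Rightarrow> ('s \<Rightarrow> 'a \<Rightarrow> real) \<Rightarrow> ('m::finite \<Rightarrow> 's \<Rightarrow> 'a \<Rightarrow> real) \<Rightarrow> real ^ 'm \<Rightarrow> real
    \<Rightarrow> ('s \<Rightarrow> 'a \<Rightarrow> real) \<Rightarrow> real ^ 'm \<Rightarrow> real" where
  "lagrangian P \<rho> \<gamma> r0 r c \<tau> \<pi> lam =
     disc_value P \<rho> \<gamma> \<pi> r0 + inner lam (value_vec P \<rho> \<gamma> r \<pi> - c) + \<tau> * disc_entropy P \<rho> \<gamma> \<pi>"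

definition dual_fun :: "('s::finite \<Rightarrow> 'a::finite \<Rightarrow> 's \<Rightarrow> real) \<Rightarrow> ('s \<Rightarrow> real) \<Rightarrow> real
    \<Rightarrow> ('s \<Rightarrow> 'a \<Rightarrow> real) \<Rightarrow> ('m::finite \<Rightarrow> 's \<Rightarrow> 'a \<Rightarrow> real) \<Rightarrow> real ^ 'm \<Rightarrow> real
    \<Rightarrow> real ^ 'm \<Rightarrow> real" where
  "dual_fun P \<rho> \<gamma> r0 r c \<tau> lam = (SUP \<pi>\<in>policies. lagrangian P \<rho> \<gamma> r0 r c \<tau> \<pi> lam)"

definition Lambda_set :: "real \<Rightarrow> ('s::finite \<Rightarrow> 'a::finite \<Rightarrow> real) \<Rightarrow> real \<Rightarrow> (real ^ 'm::finite) set" where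
  "Lambda_set \<gamma> r0 \<xi> =
     {lam. (\<forall>i. 0 \<le> lam $ i) \<and>
          (\<Sum>i\<in>UNIV. lam $ i) \<le> (Max (range (\<lambda>(s, a). r0 s a)) + ln (real CARD('a)))
                                   / ((1 - \<gamma>) * \<xi>)}"

end

theory Submission
  imports Defs
begin

lemma danskin:
  fixes K :: "'p::topological_space set" and \<phi> :: "'p \<Rightarrow> real" and g :: "'p \<Rightarrow> real ^ 'm::finite"
  assumes K: "compact K" and c\<phi>: "continuous_on K \<phi>" and cg: "continuous_on K g"
    and p0: "p0 \<in> K"
    and mx: "\<forall>p\<in>K. \<phi> p + inner x0 (g p) \<le> \<phi> p0 + inner x0 (g p0)"
    and uq: "\<forall>p\<in>K. \<phi> p + inner x0 (g p) = \<phi> p0 + inner x0 (g p0) \<longrightarrow> p = p0"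
  shows "((\<lambda>x. SUP p\<in>K. \<phi> p + inner x (g p)) has_derivative (\<lambda>h. inner (g p0) h)) (at x0)"
proof -
  define L where "L p x = \<phi> p + inner x (g p)" for p x
  define d where "d x = (SUP p\<in>K. L p x)" for x
  define G where "G = g p0"
  define d0 where "d0 = L p0 x0"
  have Kne: "K \<noteq> {}" using p0 by auto
  have cL: "continuous_on K (\<lambda>p. L p x)" for x
    unfolding L_def by (intro continuous_intros c\<phi> cg)
  have bdd: "bdd_above ((\<lambda>p. L p x) ` K)" for x
    using compact_continuous_image[OF cL K] by (meson bounded_imp_bdd_above compact_imp_bounded)
  have dx0: "d x0 = d0"
    unfolding d_def d0_def using mx p0 unfolding L_def[abs_def] by (intro cSup_eq_maximum) auto
  have Lsplit: "L p y = L p x0 + inner (y - x0) (g p)" for p y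
    unfolding L_def by (simp add: inner_diff_left)
  have lower: "d y \<ge> d0 + inner (g p0) (y - x0)" for y
  proof -
    have "L p0 y \<le> d y" unfolding d_def by (rule cSUP_upper[OF p0 bdd])
    thus ?thesis using Lsplit[of p0 y] unfolding d0_def by (simp add: inner_commute)
  qed
  have upper: "\<exists>\<delta>>0. \<forall>y. norm (y - x0) < \<delta> \<longrightarrow> d y \<le> d0 + inner (g p0) (y - x0) + e * norm (y - x0)"
    if e: "e > 0" for e
  proof -
    obtain A where A: "open A" "A \<inter> K = g -` ball G e \<inter> K"
      using cg unfolding continuous_on_open_invariant by (meson open_ball)
    have p0A: "p0 \<in> A" using A p0 e unfolding G_def by auto
    have cK': "compact (K - A)" using K A by (intro compact_diff)
    obtain \<eta> where \<eta>: "\<eta> > 0" "\<forall>p\<in>K - A. L p x0 \<le> d0 - \<eta>"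
    proof (cases "K - A = {}")
      case True thus ?thesis using that[of 1] by auto
    next
      case False
      obtain q where q: "q \<in> K - A" "\<forall>p\<in>K - A. L p x0 \<le> L q x0"
        using continuous_attains_sup[OF cK' False continuous_on_subset[OF cL]] by auto
      have "q \<noteq> p0" using q p0A by auto
      hence "L q x0 < d0" using q mx uq unfolding d0_def L_def by force
      thus ?thesis using that[of "d0 - L q x0"] q by auto
    qed
    obtain M where M: "M > 0" "\<forall>p\<in>K. norm (g p - G) \<le> M"
    proof -
      have "bounded ((\<lambda>p. g p - G) ` K)"
        by (intro compact_imp_bounded compact_continuous_image continuous_intros cg K)
      then obtain M where "M > 0" "\<forall>z\<in>(\<lambda>p. g p - G) ` K. norm z \<le> M"
        using bounded_pos by metis
      thus ?thesis using that by auto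
    qed
    show ?thesis
    proof (intro exI[of _ "\<eta> / M"] conjI allI impI)
      show "\<eta> / M > 0" using \<eta> M by simp
      fix y assume y: "norm (y - x0) < \<eta> / M"
      have "d y \<le> d0 + inner (g p0) (y - x0) + e * norm (y - x0)"
        unfolding d_def
      proof (rule cSUP_least[OF Kne])
        fix p assume pK: "p \<in> K"
        have Lp: "L p y = L p x0 + inner (y - x0) G + inner (y - x0) (g p - G)"
          using Lsplit[of p y] by (simp add: inner_diff_right)
        have cs: "inner (y - x0) (g p - G) \<le> norm (y - x0) * norm (g p - G)"
          by (rule norm_cauchy_schwarz)
        have Lle: "L p x0 \<le> d0" using mx pK unfolding L_def d0_def by auto
        show "L p y \<le> d0 + inner (g p0) (y - x0) + e * norm (y - x0)"
        proof (cases "p \<in> A")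
          case True
          hence "norm (g p - G) < e" using A pK by (auto simp: dist_norm norm_minus_commute)
          hence "norm (y - x0) * norm (g p - G) \<le> e * norm (y - x0)"
            by (metis less_imp_le mult.commute mult_left_mono norm_ge_zero)
          thus ?thesis using Lp cs Lle unfolding G_def by (simp add: inner_commute)
        next
          case False
          have "norm (y - x0) * norm (g p - G) \<le> norm (y - x0) * M"
            using M pK by (simp add: mult_left_mono)
          also have "\<dots> \<le> \<eta>" using y M by (simp add: field_simps)
          finally have "inner (y - x0) (g p - G) \<le> \<eta>" using cs by linarith
          moreover have "L p x0 \<le> d0 - \<eta>" using \<eta> pK False by auto
          moreover have "0 \<le> e * norm (y - x0)" using e by simp
          ultimately show ?thesis using Lp unfolding G_def by (simp add: inner_commute)
        qed
      qed
      thus "d y \<le> d0 + inner (g p0) (y - x0) + e * norm (y - x0)" .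
    qed
  qed
  have "(d has_derivative (\<lambda>h. inner (g p0) h)) (at x0)"
    unfolding has_derivative_at_alt
  proof (intro conjI allI impI)
    show "bounded_linear (inner (g p0))" by (rule bounded_linear_inner_right)
    fix e :: real assume "e > 0"
    then obtain \<delta> where "\<delta> > 0" and \<delta>: "\<forall>y. norm (y - x0) < \<delta> \<longrightarrow> d y \<le> d0 + inner (g p0) (y - x0) + e * norm (y - x0)"
      using upper by blast
    show "\<exists>\<delta>>0. \<forall>y. norm (y - x0) < \<delta> \<longrightarrow> norm (d y - d x0 - inner (g p0) (y - x0)) \<le> e * norm (y - x0)"
    proof (intro exI[of _ \<delta>] conjI allI impI)
      fix y assume "norm (y - x0) < \<delta>"
      with \<delta> lower[of y] show "norm (d y - d x0 - inner (g p0) (y - x0)) \<le> e * norm (y - x0)"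
        using dx0 by auto
    qed (rule \<open>\<delta> > 0\<close>)
  qed
  thus ?thesis unfolding d_def L_def .
qed

lemma cont_coord: "continuous_on S (\<lambda>\<pi>::'s \<Rightarrow> 'a \<Rightarrow> real. \<pi> s a)"
proof -
  have "continuous_on UNIV (\<lambda>\<pi>::'s \<Rightarrow> 'a \<Rightarrow> real. \<pi> s)" by simp
  hence "continuous_on UNIV (\<lambda>\<pi>::'s \<Rightarrow> 'a \<Rightarrow> real. \<pi> s a)"
    by (rule continuous_on_product_then_coordinatewise)
  thus ?thesis by (rule continuous_on_subset) auto
qed

lemma sd_cont: "continuous_on S (\<lambda>\<pi>. state_dist P \<rho> \<pi> t s)"
proof (induction t arbitrary: s)
  case 0 then show ?case by simp
next
  case (Suc t) then show ?case by (simp, intro continuous_intros cont_coord)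
qed

lemma sd_prob:
  assumes P_nonneg: "\<forall>s a s'. 0 \<le> P s a s'"
    and P_sum: "\<forall>s a. (\<Sum>s'\<in>UNIV. P s a s') = 1"
    and rho_nonneg: "\<forall>s. 0 \<le> \<rho> s"
    and rho_sum: "(\<Sum>s\<in>UNIV. \<rho> s) = 1"
    and pi: "\<pi> \<in> policies"
  shows "(\<forall>s. 0 \<le> state_dist P \<rho> \<pi> t s) \<and> (\<Sum>s\<in>UNIV. state_dist P \<rho> \<pi> t s) = 1"
proof (induction t)
  case 0 then show ?case using rho_nonneg rho_sum by simp
next
  case (Suc t)
  have pin: "\<forall>s a. 0 \<le> \<pi> s a" and pis: "\<forall>s. (\<Sum>a\<in>UNIV. \<pi> s a) = 1"
    using pi unfolding policies_def by auto
  have "(\<Sum>s'\<in>UNIV. \<Sum>s\<in>UNIV. \<Sum>a\<in>UNIV. state_dist P \<rho> \<pi> t s * \<pi> s a * P s a s')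
      = (\<Sum>s\<in>UNIV. \<Sum>s'\<in>UNIV. \<Sum>a\<in>UNIV. state_dist P \<rho> \<pi> t s * \<pi> s a * P s a s')"
    by (rule sum.swap)
  also have "\<dots> = (\<Sum>s\<in>UNIV. \<Sum>a\<in>UNIV. \<Sum>s'\<in>UNIV. state_dist P \<rho> \<pi> t s * \<pi> s a * P s a s')"
    by (rule sum.cong[OF refl], rule sum.swap)
  also have "\<dots> = (\<Sum>s\<in>UNIV. \<Sum>a\<in>UNIV. state_dist P \<rho> \<pi> t s * \<pi> s a * (\<Sum>s'\<in>UNIV. P s a s'))"
    by (simp only: sum_distrib_left)
  also have "\<dots> = (\<Sum>s\<in>UNIV. \<Sum>a\<in>UNIV. state_dist P \<rho> \<pi> t s * \<pi> s a)"
    using P_sum by simp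
  also have "\<dots> = (\<Sum>s\<in>UNIV. state_dist P \<rho> \<pi> t s * (\<Sum>a\<in>UNIV. \<pi> s a))"
    by (simp only: sum_distrib_left)
  also have "\<dots> = 1" using pis Suc by simp
  finally show ?case using Suc pin P_nonneg
    by (auto intro!: sum_nonneg mult_nonneg_nonneg)
qed

lemma disc_cont:
  fixes f :: "('s::finite \<Rightarrow> 'a::finite \<Rightarrow> real) \<Rightarrow> 's \<Rightarrow> 'a \<Rightarrow> real"
    and P :: "'s \<Rightarrow> 'a \<Rightarrow> 's \<Rightarrow> real"
  assumes P_nonneg: "\<forall>s a s'. 0 \<le> P s a s'"
    and P_sum: "\<forall>s a. (\<Sum>s'\<in>UNIV. P s a s') = 1"
    and rho_nonneg: "\<forall>s. 0 \<le> \<rho> s"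
    and rho_sum: "(\<Sum>s\<in>UNIV. \<rho> s) = 1"
    and gamma: "0 < \<gamma>" "\<gamma> < 1"
    and bnd: "\<And>\<pi> s a. \<pi> \<in> policies \<Longrightarrow> \<bar>\<pi> s a * f \<pi> s a\<bar> \<le> B"
    and cf: "\<And>s a. continuous_on policies (\<lambda>\<pi>. \<pi> s a * f \<pi> s a)"
  shows "continuous_on policies (\<lambda>\<pi>::'s \<Rightarrow> 'a \<Rightarrow> real. disc_value P \<rho> \<gamma> \<pi> (f \<pi>))"
proof -
  define F where "F t \<pi> = \<gamma> ^ t * (\<Sum>s\<in>UNIV. \<Sum>a\<in>UNIV. state_dist P \<rho> \<pi> t s * (\<pi> s a * f \<pi> s a))" for t \<pi>
  have eq: "disc_value P \<rho> \<gamma> \<pi> (f \<pi>) = suminf (\<lambda>t. F t \<pi>)" for \<pi>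
    unfolding disc_value_def F_def by (simp add: mult.assoc)
  have nb: "norm (F t \<pi>) \<le> \<gamma> ^ t * (real CARD('a) * B)" if pi: "\<pi> \<in> policies" for t \<pi>
  proof -
    have sp: "(\<forall>s. 0 \<le> state_dist P \<rho> \<pi> t s) \<and> (\<Sum>s\<in>UNIV. state_dist P \<rho> \<pi> t s) = 1"
      by (rule sd_prob[OF assms(1-4) pi])
    have "\<bar>\<Sum>s\<in>UNIV. \<Sum>a\<in>UNIV. state_dist P \<rho> \<pi> t s * (\<pi> s a * f \<pi> s a)\<bar>
        \<le> (\<Sum>s\<in>UNIV. \<Sum>a\<in>UNIV. \<bar>state_dist P \<rho> \<pi> t s * (\<pi> s a * f \<pi> s a)\<bar>)"
      by (rule order.trans[OF sum_abs], rule sum_mono, rule sum_abs)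
    also have "\<dots> \<le> (\<Sum>s\<in>UNIV. \<Sum>a\<in>(UNIV::'a set). state_dist P \<rho> \<pi> t s * B)"
    proof -
      have pt: "\<bar>state_dist P \<rho> \<pi> t s * (\<pi> s a * f \<pi> s a)\<bar> \<le> state_dist P \<rho> \<pi> t s * B" for s a
      proof -
        have "\<bar>\<pi> s a * f \<pi> s a\<bar> \<le> B" by (rule bnd[OF pi])
        thus ?thesis using sp by (simp add: abs_mult mult_left_mono)
      qed
      show ?thesis by (rule sum_mono, rule sum_mono, rule pt)
    qed
    also have "\<dots> = real CARD('a) * B * (\<Sum>s\<in>UNIV. state_dist P \<rho> \<pi> t s)"
      by (simp add: sum_distrib_left mult_ac)
    also have "\<dots> = real CARD('a) * B"
      using sp by simp
    finally show ?thesis unfolding F_def using gamma by (simp add: abs_mult mult_left_mono)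
  qed
  have ul: "uniform_limit policies (\<lambda>n \<pi>. \<Sum>i<n. F i \<pi>) (\<lambda>\<pi>. suminf (\<lambda>i. F i \<pi>)) sequentially"
    by (rule Weierstrass_m_test[OF nb]) (use gamma in \<open>auto intro!: summable_mult2 summable_geometric\<close>)
  have "continuous_on policies (\<lambda>\<pi>. suminf (\<lambda>i. F i \<pi>))"
  proof (rule uniform_limit_theorem[OF _ ul])
    show "\<forall>\<^sub>F n in sequentially. continuous_on policies (\<lambda>\<pi>. \<Sum>i<n. F i \<pi>)"
      unfolding F_def by (intro always_eventually allI continuous_intros sd_cont cf)
  qed simp
  thus ?thesis unfolding eq .
qed

lemma xlnx_cont: "continuous_on {0..} (\<lambda>x::real. x * ln x)"
proof -
  have "continuous (at x within {0..}) (\<lambda>x::real. x * ln x)" if "x \<in> {0..}" for x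
  proof (cases "x = 0")
    case True
    have "((\<lambda>y::real. - (ln y / y)) \<longlongrightarrow> - 0) at_top"
      by (intro tendsto_minus ln_x_over_x_tendsto_0)
    moreover have "eventually (\<lambda>y::real. - (ln y / y) = inverse y * ln (inverse y)) at_top"
      using eventually_gt_at_top[of "0::real"]
      by eventually_elim (simp add: ln_inverse divide_inverse)
    ultimately have "((\<lambda>y::real. inverse y * ln (inverse y)) \<longlongrightarrow> 0) at_top"
      using Lim_transform_eventually by fastforce
    hence "((\<lambda>x::real. x * ln x) \<longlongrightarrow> 0) (at_right 0)"
      by (simp add: filterlim_at_right_to_top)
    thus ?thesis using True by (simp add: continuous_within at_within_Ici_at_right)
  next
    case False
    hence "x > 0" using that by auto
    hence "isCont (\<lambda>x::real. x * ln x) x" by (intro continuous_intros) auto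
    thus ?thesis by (rule continuous_at_imp_continuous_within)
  qed
  thus ?thesis by (simp add: continuous_on_eq_continuous_within)
qed

lemma xlnx_bnd: "0 \<le> x \<Longrightarrow> x \<le> 1 \<Longrightarrow> \<bar>x * - ln x\<bar> \<le> (1::real)"
proof -
  assume x: "0 \<le> x" "x \<le> 1"
  show ?thesis
  proof (cases "x = 0")
    case False
    hence xp: "x > 0" using x by auto
    have "ln (1/x) \<le> 1/x - 1" using xp by (intro ln_le_minus_one) auto
    hence "- ln x \<le> 1/x - 1" using xp by (simp add: ln_div)
    hence "x * - ln x \<le> x * (1/x - 1)" using xp by (intro mult_left_mono) auto
    also have "\<dots> \<le> 1" using xp x by (simp add: field_simps)
    finally have a: "x * - ln x \<le> 1" .
    have lnn: "ln x \<le> 0" using xp x by simp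
    have "x * ln x \<le> 0" using xp lnn by (simp add: mult_nonneg_nonpos)
    hence "0 \<le> x * - ln x" by simp
    with a show ?thesis by simp
  qed simp
qed

lemma policies_compact: "compact (policies :: ('s::finite \<Rightarrow> 'a::finite \<Rightarrow> real) set)"
proof -
  have c1: "compact (PiE UNIV (\<lambda>_::'a. {0..1::real}))"
    using compactin_PiE[of "\<lambda>_::'a. euclidean" UNIV "\<lambda>_. {0..1::real}"]
    by (simp add: euclidean_product_topology)
  have c2: "compact (PiE UNIV (\<lambda>_::'s. PiE UNIV (\<lambda>_::'a. {0..1::real})))"
    using compactin_PiE[of "\<lambda>_::'s. euclidean" UNIV "\<lambda>_. PiE UNIV (\<lambda>_::'a. {0..1::real})"] c1
    by (simp add: euclidean_product_topology)
  have cl: "closed (policies :: ('s \<Rightarrow> 'a \<Rightarrow> real) set)"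
  proof -
    have "policies = (\<Inter>s. \<Inter>a. {\<pi>::'s \<Rightarrow> 'a \<Rightarrow> real. 0 \<le> \<pi> s a}) \<inter> (\<Inter>s. {\<pi>. (\<Sum>a\<in>UNIV. \<pi> s a) = 1})"
      unfolding policies_def by auto
    also have "closed \<dots>"
      by (intro closed_Int closed_INT ballI closed_Collect_le closed_Collect_eq continuous_intros
          cont_coord)
    finally show ?thesis .
  qed
  have "policies \<subseteq> PiE UNIV (\<lambda>_::'s. PiE UNIV (\<lambda>_::'a. {0..1::real}))"
  proof
    fix \<pi> :: "'s \<Rightarrow> 'a \<Rightarrow> real" assume pi: "\<pi> \<in> policies"
    have "\<pi> s a \<le> 1" for s a
    proof -
      have "\<pi> s a \<le> (\<Sum>b\<in>UNIV. \<pi> s b)"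
        using pi unfolding policies_def by (intro member_le_sum) auto
      thus ?thesis using pi unfolding policies_def by auto
    qed
    thus "\<pi> \<in> PiE UNIV (\<lambda>_::'s. PiE UNIV (\<lambda>_::'a. {0..1::real}))"
      using pi unfolding policies_def by (auto simp: PiE_UNIV_domain)
  qed
  hence "policies = PiE UNIV (\<lambda>_::'s. PiE UNIV (\<lambda>_::'a. {0..1::real})) \<inter> policies" by auto
  thus ?thesis using compact_Int_closed[OF c2 cl] by metis
qed


lemma pol_le1: "\<pi> \<in> policies \<Longrightarrow> \<pi> s a \<le> 1"
proof -
  assume pi: "\<pi> \<in> policies"
  have "\<pi> s a \<le> (\<Sum>b\<in>UNIV. \<pi> s b)"
    using pi unfolding policies_def by (intro member_le_sum) auto
  thus ?thesis using pi unfolding policies_def by auto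
qed

lemma disc_cont_fixed:
  fixes f :: "'s::finite \<Rightarrow> 'a::finite \<Rightarrow> real"
    and P :: "'s \<Rightarrow> 'a \<Rightarrow> 's \<Rightarrow> real"
  assumes P_nonneg: "\<forall>s a s'. 0 \<le> P s a s'"
    and P_sum: "\<forall>s a. (\<Sum>s'\<in>UNIV. P s a s') = 1"
    and rho_nonneg: "\<forall>s. 0 \<le> \<rho> s"
    and rho_sum: "(\<Sum>s\<in>UNIV. \<rho> s) = 1"
    and gamma: "0 < \<gamma>" "\<gamma> < 1"
  shows "continuous_on policies (\<lambda>\<pi>::'s \<Rightarrow> 'a \<Rightarrow> real. disc_value P \<rho> \<gamma> \<pi> f)"
proof -
  have "continuous_on policies (\<lambda>\<pi>::'s \<Rightarrow> 'a \<Rightarrow> real. disc_value P \<rho> \<gamma> \<pi> ((\<lambda>_. f) \<pi>))"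
  proof (rule disc_cont[OF assms, where B = "\<Sum>s\<in>UNIV. \<Sum>a\<in>UNIV. \<bar>f s a\<bar>"])
    fix \<pi> :: "'s \<Rightarrow> 'a \<Rightarrow> real" and s a assume pi: "\<pi> \<in> policies"
    have "0 \<le> \<pi> s a" "\<pi> s a \<le> 1" using pi pol_le1[OF pi] unfolding policies_def by auto
    hence "\<bar>\<pi> s a * f s a\<bar> \<le> \<bar>f s a\<bar>"
      by (simp add: abs_mult mult_left_le_one_le)
    also have "\<bar>f s a\<bar> \<le> (\<Sum>a\<in>UNIV. \<bar>f s a\<bar>)" by (rule member_le_sum) auto
    also have "\<dots> \<le> (\<Sum>s\<in>UNIV. \<Sum>a\<in>UNIV. \<bar>f s a\<bar>)"
      by (rule member_le_sum[where f = "\<lambda>s. \<Sum>a\<in>UNIV. \<bar>f s a\<bar>"]) (auto intro: sum_nonneg)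
    finally show "\<bar>\<pi> s a * (\<lambda>_. f) \<pi> s a\<bar> \<le> (\<Sum>s\<in>UNIV. \<Sum>a\<in>UNIV. \<bar>f s a\<bar>)" by simp
  next
    fix s a
    show "continuous_on policies (\<lambda>\<pi>::'s \<Rightarrow> 'a \<Rightarrow> real. \<pi> s a * (\<lambda>_. f) \<pi> s a)"
      by (intro continuous_intros cont_coord)
  qed
  thus ?thesis by simp
qed

lemma entropy_cont:
  fixes P :: "'s::finite \<Rightarrow> 'a::finite \<Rightarrow> 's \<Rightarrow> real"
  assumes P_nonneg: "\<forall>s a s'. 0 \<le> P s a s'"
    and P_sum: "\<forall>s a. (\<Sum>s'\<in>UNIV. P s a s') = 1"
    and rho_nonneg: "\<forall>s. 0 \<le> \<rho> s"
    and rho_sum: "(\<Sum>s\<in>UNIV. \<rho> s) = 1"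
    and gamma: "0 < \<gamma>" "\<gamma> < 1"
  shows "continuous_on policies (\<lambda>\<pi>::'s \<Rightarrow> 'a \<Rightarrow> real. disc_entropy P \<rho> \<gamma> \<pi>)"
proof -
  have "continuous_on policies (\<lambda>\<pi>::'s \<Rightarrow> 'a \<Rightarrow> real. disc_value P \<rho> \<gamma> \<pi> ((\<lambda>p s a. - ln (p s a)) \<pi>))"
  proof (rule disc_cont[OF assms, where B = 1])
    fix \<pi> :: "'s \<Rightarrow> 'a \<Rightarrow> real" and s a assume pi: "\<pi> \<in> policies"
    have "0 \<le> \<pi> s a" "\<pi> s a \<le> 1" using pi pol_le1[OF pi] unfolding policies_def by auto
    thus "\<bar>\<pi> s a * (\<lambda>p s a. - ln (p s a)) \<pi> s a\<bar> \<le> 1" using xlnx_bnd by simp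
  next
    fix s a
    have "continuous_on policies (\<lambda>\<pi>::'s \<Rightarrow> 'a \<Rightarrow> real. (\<lambda>x. x * ln x) (\<pi> s a))"
      by (rule continuous_on_compose2[OF xlnx_cont cont_coord]) (auto simp: policies_def)
    hence "continuous_on policies (\<lambda>\<pi>::'s \<Rightarrow> 'a \<Rightarrow> real. - (\<pi> s a * ln (\<pi> s a)))"
      by (intro continuous_on_minus) simp
    thus "continuous_on policies (\<lambda>\<pi>::'s \<Rightarrow> 'a \<Rightarrow> real. \<pi> s a * (\<lambda>p s a. - ln (p s a)) \<pi> s a)"
      by simp
  qed
  thus ?thesis unfolding disc_entropy_def by simp
qed

theorem proposition1:
  fixes P :: "'s::finite \<Rightarrow> 'a::finite \<Rightarrow> 's \<Rightarrow> real"
    and \<rho> :: "'s \<Rightarrow> real"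
    and \<gamma> \<tau> \<xi> :: real
    and r0 :: "'s \<Rightarrow> 'a \<Rightarrow> real"
    and r :: "'m::finite \<Rightarrow> 's \<Rightarrow> 'a \<Rightarrow> real"
    and c :: "real ^ 'm"
  assumes P_nonneg: "\<forall>s a s'. 0 \<le> P s a s'"
    and P_sum: "\<forall>s a. (\<Sum>s'\<in>UNIV. P s a s') = 1"
    and rho_nonneg: "\<forall>s. 0 \<le> \<rho> s"
    and rho_sum: "(\<Sum>s\<in>UNIV. \<rho> s) = 1"
    and gamma: "0 < \<gamma>" "\<gamma> < 1"
    and r0_pos: "\<forall>s a. 0 < r0 s a"
    and r_pos: "\<forall>i s a. 0 < r i s a"
    and xi_pos: "0 < \<xi>"
    and slater: "\<exists>\<pi>\<xi>\<in>policies. \<forall>i. value_vec P \<rho> \<gamma> r \<pi>\<xi> $ i \<ge> c $ i + \<xi>"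
    and tau_pos: "0 < \<tau>"
    and unique: "\<forall>lam\<in>Lambda_set \<gamma> r0 \<xi>. \<exists>!\<pi>. \<pi> \<in> policies \<and>
                    lagrangian P \<rho> \<gamma> r0 r c \<tau> \<pi> lam = dual_fun P \<rho> \<gamma> r0 r c \<tau> lam"
  shows "\<forall>lam\<in>Lambda_set \<gamma> r0 \<xi>. \<forall>\<pi>\<in>policies.
           lagrangian P \<rho> \<gamma> r0 r c \<tau> \<pi> lam = dual_fun P \<rho> \<gamma> r0 r c \<tau> lam \<longrightarrow>
           (dual_fun P \<rho> \<gamma> r0 r c \<tau> has_derivative
              (\<lambda>h. inner (value_vec P \<rho> \<gamma> r \<pi> - c) h)) (at lam)"
  proof (intro ballI impI)
  fix lam \<pi> assume lamL: "lam \<in> Lambda_set \<gamma> r0 \<xi>" and piP: "\<pi> \<in> policies"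
    and eq: "lagrangian P \<rho> \<gamma> r0 r c \<tau> \<pi> lam = dual_fun P \<rho> \<gamma> r0 r c \<tau> lam"
  define \<phi> where "\<phi> p = disc_value P \<rho> \<gamma> p r0 + \<tau> * disc_entropy P \<rho> \<gamma> p" for p
  define g where "g p = value_vec P \<rho> \<gamma> r p - c" for p
  have Leq: "lagrangian P \<rho> \<gamma> r0 r c \<tau> p x = \<phi> p + inner x (g p)" for p x
    unfolding lagrangian_def \<phi>_def g_def by simp
  have dual: "dual_fun P \<rho> \<gamma> r0 r c \<tau> = (\<lambda>x. SUP p\<in>policies. \<phi> p + inner x (g p))"
    unfolding dual_fun_def Leq by simp
  note as = P_nonneg P_sum rho_nonneg rho_sum gamma
  have c\<phi>: "continuous_on policies \<phi>"
    unfolding \<phi>_def by (intro continuous_intros disc_cont_fixed[OF as] entropy_cont[OF as])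
  have cg: "continuous_on policies g"
    unfolding g_def value_vec_def by (intro continuous_intros disc_cont_fixed[OF as])
  have K: "compact (policies :: ('s \<Rightarrow> 'a \<Rightarrow> real) set)" by (rule policies_compact)
  have cL: "continuous_on policies (\<lambda>p. \<phi> p + inner lam (g p))"
    by (intro continuous_intros c\<phi> cg)
  have bdd: "bdd_above ((\<lambda>p. \<phi> p + inner lam (g p)) ` policies)"
    using compact_continuous_image[OF cL K] by (meson bounded_imp_bdd_above compact_imp_bounded)
  have eq2: "\<phi> \<pi> + inner lam (g \<pi>) = (SUP p\<in>policies. \<phi> p + inner lam (g p))"
    using eq unfolding Leq dual by simp
  have mx: "\<forall>p\<in>policies. \<phi> p + inner lam (g p) \<le> \<phi> \<pi> + inner lam (g \<pi>)"
    unfolding eq2 using bdd by (auto intro: cSUP_upper)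
  have uq: "\<forall>p\<in>policies. \<phi> p + inner lam (g p) = \<phi> \<pi> + inner lam (g \<pi>) \<longrightarrow> p = \<pi>"
  proof (intro ballI impI)
    fix p assume pP: "p \<in> policies" and e: "\<phi> p + inner lam (g p) = \<phi> \<pi> + inner lam (g \<pi>)"
    have u: "\<exists>!\<pi>. \<pi> \<in> policies \<and> lagrangian P \<rho> \<gamma> r0 r c \<tau> \<pi> lam = dual_fun P \<rho> \<gamma> r0 r c \<tau> lam"
      using unique lamL by blast
    have "lagrangian P \<rho> \<gamma> r0 r c \<tau> p lam = dual_fun P \<rho> \<gamma> r0 r c \<tau> lam"
      using e eq unfolding Leq by simp
    thus "p = \<pi>" using u pP piP eq by blast
  qed
  have "((\<lambda>x. SUP p\<in>policies. \<phi> p + inner x (g p)) has_derivative (\<lambda>h. inner (g \<pi>) h)) (at lam)"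
    by (rule danskin[OF K c\<phi> cg piP mx uq])
  thus "(dual_fun P \<rho> \<gamma> r0 r c \<tau> has_derivative (\<lambda>h. inner (value_vec P \<rho> \<gamma> r \<pi> - c) h)) (at lam)"
    unfolding dual g_def .
qed

end
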